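(* Let $(S,\cdot)$ be a discrete semigroup, let $\mathcal{F}$ be a filter on $S$ such that $\overline{\mathcal{F}}$ is a subsemigroup of $\beta S$, let $(X,\langle T_s\rangle_{s\in S})$ be a dynamical system, and let $x,y\in X$. If $x$ and $y$ are $\mathcal{F}$-proximal, then there is a minimal left ideal $L$ of $\overline{\mathcal{F}}$ such that $T_u(x)=T_u(y)$ for all $u\in L$.
   Context: $\beta S$ is the Stone–Čech compactification of $S$ (ultrafilters on $S$) with the extended operation making it a compact right topological semigroup; $\overline{\mathcal{F}}=\bigcap_{F\in\mathcal{F}}\overline{F}$ is the set of ultrafilters containing $\mathcal{F}$. A dynamical system $(X,\langle T_s\rangle_{s\in S})$: $X$ compact Hausdorff, each $T_s$ continuous, $T_s\circ T_t=T_{st}$. For $p\in\beta S$, $T_p(x)=p\text{-}\lim_{s\in S}T_s(x)$, and $T_p\circ T_q=T_{pq}$. Points $x,y$ are $\mathcal{F}$-proximal if for every neighbourhood $U$ of the diagonal in $X\times X$ and every $F\in\mathcal{F}$ there is $s\in F$ with $(T_s(x),T_s(y))\in U$. *)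

theory Defs
  imports "HOL-Analysis.Analysis"
begin

text \<open>Points of beta S are ultrafilters on S (S = the whole type 's, discrete).
  An ultrafilter is a proper filter deciding every subset.\<close>
definition ultra :: "'s filter \<Rightarrow> bool" where
  "ultra p \<longleftrightarrow> p \<noteq> bot \<and> (\<forall>A. eventually (\<lambda>s. s \<in> A) p \<or> eventually (\<lambda>s. s \<notin> A) p)"

definition betaS :: "'s filter set" where
  "betaS = {p. ultra p}"

definition bmult :: "'s::semigroup_mult filter \<Rightarrow> 's filter \<Rightarrow> 's filter" where
  "bmult p q = Abs_filter (\<lambda>P. eventually (\<lambda>s. eventually (\<lambda>t. P (s * t)) q) p)"

text \<open>closure of a filter F: the ultrafilters containing F (p \<le> F means every F-set is a p-set).\<close>
definition Fbar :: "'s filter \<Rightarrow> 's filter set" where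
  "Fbar F = {p \<in> betaS. p \<le> F}"

definition subsemigroup :: "'s::semigroup_mult filter set \<Rightarrow> bool" where
  "subsemigroup A \<longleftrightarrow> A \<subseteq> betaS \<and> (\<forall>p\<in>A. \<forall>q\<in>A. bmult p q \<in> A)"

definition left_ideal :: "'s::semigroup_mult filter set \<Rightarrow> 's filter set \<Rightarrow> bool" where
  "left_ideal A L \<longleftrightarrow> L \<noteq> {} \<and> L \<subseteq> A \<and> (\<forall>p\<in>A. \<forall>q\<in>L. bmult p q \<in> L)"

definition minimal_left_ideal :: "'s::semigroup_mult filter set \<Rightarrow> 's filter set \<Rightarrow> bool" where
  "minimal_left_ideal A L \<longleftrightarrow> left_ideal A L \<and> (\<forall>L'. left_ideal A L' \<and> L' \<subseteq> L \<longrightarrow> L' = L)"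

definition dynamical_system :: "('s::semigroup_mult \<Rightarrow> 'x::t2_space \<Rightarrow> 'x) \<Rightarrow> bool" where
  "dynamical_system T \<longleftrightarrow> compact (UNIV :: 'x set) \<and> (\<forall>s. continuous_on UNIV (T s))
     \<and> (\<forall>s t. T s \<circ> T t = T (s * t))"

definition Tp :: "('s \<Rightarrow> 'x::t2_space \<Rightarrow> 'x) \<Rightarrow> 's filter \<Rightarrow> 'x \<Rightarrow> 'x" where
  "Tp T p x = Lim p (\<lambda>s. T s x)"

definition F_proximal :: "'s filter \<Rightarrow> ('s \<Rightarrow> 'x::topological_space \<Rightarrow> 'x) \<Rightarrow> 'x \<Rightarrow> 'x \<Rightarrow> bool" where
  "F_proximal F T x y \<longleftrightarrow> (\<forall>U. open U \<and> (\<forall>z. (z, z) \<in> U) \<longrightarrow>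
     (\<forall>A. eventually (\<lambda>s. s \<in> A) F \<longrightarrow> (\<exists>s\<in>A. (T s x, T s y) \<in> U)))"

end

theory Submission
  imports Defs
begin


lemma ultra_cases: "ultra p \<Longrightarrow> eventually P p \<or> eventually (\<lambda>s. \<not> P s) p"
  unfolding ultra_def by (drule conjunct2, erule allE[of _ "{s. P s}"]) simp

lemma ultra_nbot: "ultra p \<Longrightarrow> p \<noteq> bot"
  unfolding ultra_def by simp

lemma ultra_contra: "ultra p \<Longrightarrow> eventually P p \<Longrightarrow> eventually (\<lambda>s. \<not> P s) p \<Longrightarrow> False"
proof -
  assume u: "ultra p" and a: "eventually P p" "eventually (\<lambda>s. \<not> P s) p"
  have "eventually (\<lambda>s. False) p" using a by (rule eventually_elim2) auto
  then show False using ultra_nbot[OF u] by (simp add: eventually_False)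
qed

lemma ultra_or: "ultra p \<Longrightarrow> eventually (\<lambda>s. P s \<or> Q s) p \<Longrightarrow> eventually P p \<or> eventually Q p"
proof -
  assume u: "ultra p" and a: "eventually (\<lambda>s. P s \<or> Q s) p"
  show ?thesis
  proof (cases "eventually P p")
    case False
    then have "eventually (\<lambda>s. \<not> P s) p" using ultra_cases[OF u, of P] by auto
    with a have "eventually Q p" by (rule eventually_elim2) auto
    then show ?thesis by auto
  qed auto
qed

lemma ultra_le_eq: "ultra p \<Longrightarrow> ultra q \<Longrightarrow> q \<le> p \<Longrightarrow> q = p"
proof (rule antisym)
  assume u: "ultra p" "ultra q" and le: "q \<le> p"
  show "p \<le> q"
  proof (rule filter_leI)
    fix P assume "eventually P q"
    show "eventually P p"
    proof (rule ccontr)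
      assume "\<not> eventually P p"
      then have "eventually (\<lambda>s. \<not> P s) p" using ultra_cases[OF u(1), of P] by auto
      then have "eventually (\<lambda>s. \<not> P s) q" by (rule filter_leD[OF le])
      then show False using ultra_contra[OF u(2) \<open>eventually P q\<close>] by auto
    qed
  qed
qed

lemma ultra_exists:
  fixes G :: "'a filter"
  assumes "G \<noteq> bot" shows "\<exists>p. ultra p \<and> p \<le> G"
proof -
  let ?A = "{p. p \<noteq> bot \<and> p \<le> G}"
  have "\<exists>m\<in>?A. \<forall>a\<in>?A. (\<lambda>a b. b \<le> a) m a \<longrightarrow> a = m"
  proof (rule predicate_Zorn)
    show "partial_order_on ?A (relation_of (\<lambda>a b. b \<le> a) ?A)"
      by (rule partial_order_on_relation_ofI) auto
    fix C assume C: "C \<in> Chains (relation_of (\<lambda>a b. b \<le> a) ?A)"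
    show "\<exists>u\<in>?A. \<forall>a\<in>C. u \<le> a"
    proof (cases "C = {}")
      case True then show ?thesis using assms by auto
    next
      case False
      have sub: "C \<subseteq> ?A" and tot: "\<forall>a\<in>C. \<forall>b\<in>C. b \<le> a \<or> a \<le> b"
        using C unfolding Chains_def relation_of_def by auto
      have ev: "eventually P (Inf C) \<longleftrightarrow> (\<exists>b\<in>C. eventually P b)" for P
      proof (rule eventually_Inf_base[OF False])
        fix F G assume "F \<in> C" "G \<in> C"
        then have FG: "G \<le> F \<or> F \<le> G" using tot by blast
        show "\<exists>x\<in>C. x \<le> inf F G"
        proof (cases "G \<le> F")
          case True then show ?thesis using \<open>G \<in> C\<close> by auto
        next
          case False then show ?thesis using FG \<open>F \<in> C\<close> by auto
        qed
      qed
      have "Inf C \<noteq> bot"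
      proof
        assume "Inf C = bot"
        then have "eventually (\<lambda>x. False) (Inf C)" by simp
        then obtain b where "b \<in> C" "eventually (\<lambda>x. False) b" using ev by blast
        then show False using sub by (auto simp: eventually_False)
      qed
      moreover obtain c where "c \<in> C" using False by auto
      have c1: "Inf C \<le> c" using \<open>c \<in> C\<close> by (simp add: Inf_lower)
      have c2: "c \<le> G" using sub \<open>c \<in> C\<close> by blast
      have "Inf C \<le> G" using c1 c2 by (rule order_trans)
      ultimately show ?thesis by (auto simp: Inf_lower)
    qed
  qed
  then obtain m where m: "m \<noteq> bot" "m \<le> G" "\<And>a. a \<noteq> bot \<Longrightarrow> a \<le> G \<Longrightarrow> a \<le> m \<Longrightarrow> a = m"
    by auto
  have "ultra m" unfolding ultra_def
  proof (intro conjI allI m(1))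
    fix A
    show "eventually (\<lambda>s. s \<in> A) m \<or> eventually (\<lambda>s. s \<notin> A) m"
    proof (rule ccontr)
      assume n: "\<not> (eventually (\<lambda>s. s \<in> A) m \<or> eventually (\<lambda>s. s \<notin> A) m)"
      let ?a = "inf m (principal A)"
      have "?a \<noteq> bot"
        using n by (simp add: eventually_False[symmetric] eventually_inf_principal)
      moreover have "?a \<le> G" using m(2) by (meson inf_le1 order_trans)
      ultimately have "?a = m" using m(3)[of ?a] by (simp add: inf_le1)
      moreover have "eventually (\<lambda>s. s \<in> A) ?a" by (simp add: eventually_inf_principal)
      ultimately show False using n by simp
    qed
  qed
  then show ?thesis using m by auto
qed

lemma is_filter_bmult: "is_filter (\<lambda>P. eventually (\<lambda>s. eventually (\<lambda>t. P (s * t)) q) p)"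
proof
  show "eventually (\<lambda>s. eventually (\<lambda>t. True) q) p" by simp
next
  fix P Q
  assume a: "eventually (\<lambda>s. eventually (\<lambda>t. P (s * t)) q) p"
     and b: "eventually (\<lambda>s. eventually (\<lambda>t. Q (s * t)) q) p"
  from a b show "eventually (\<lambda>s. eventually (\<lambda>t. P (s * t) \<and> Q (s * t)) q) p"
    by (rule eventually_elim2) (rule eventually_conj)
next
  fix P Q :: "'a \<Rightarrow> bool"
  assume i: "\<forall>x. P x \<longrightarrow> Q x" and a: "eventually (\<lambda>s. eventually (\<lambda>t. P (s * t)) q) p"
  from a show "eventually (\<lambda>s. eventually (\<lambda>t. Q (s * t)) q) p"
    by (rule eventually_mono) (auto elim: eventually_mono simp: i)
qed

lemma ev_bmult: "eventually P (bmult p q) \<longleftrightarrow> eventually (\<lambda>s. eventually (\<lambda>t. P (s * t)) q) p"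
  unfolding bmult_def by (rule eventually_Abs_filter[OF is_filter_bmult])

lemma bmult_assoc: "bmult (bmult p q) r = bmult p (bmult q r)"
  by (simp add: filter_eq_iff ev_bmult mult.assoc)

lemma ultra_bmult: assumes "ultra p" "ultra q" shows "ultra (bmult p q)"
  unfolding ultra_def
proof (intro conjI allI)
  have nb: "q \<noteq> bot" "p \<noteq> bot" using assms by (auto simp: ultra_nbot)
  show "bmult p q \<noteq> bot"
  proof
    assume "bmult p q = bot"
    then have "eventually (\<lambda>s. False) (bmult p q)" by simp
    then have e: "eventually (\<lambda>s. eventually (\<lambda>t. False) q) p" by (simp only: ev_bmult)
    have "\<not> eventually (\<lambda>t. False) q" using nb by (simp add: eventually_False)
    then have "eventually (\<lambda>s. False) p" using e by (auto elim: eventually_mono)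
    then show False using nb by (simp add: eventually_False)
  qed
  fix A
  have "eventually (\<lambda>s. eventually (\<lambda>t. s * t \<in> A) q \<or> eventually (\<lambda>t. \<not> s * t \<in> A) q) p"
    using ultra_cases[OF assms(2)] by simp
  then show "eventually (\<lambda>s. s \<in> A) (bmult p q) \<or> eventually (\<lambda>s. s \<notin> A) (bmult p q)"
    unfolding ev_bmult by (rule ultra_or[OF assms(1)])
qed



lemma ultra_conv:
  fixes f :: "'s \<Rightarrow> 'x::topological_space"
  assumes c: "compact (UNIV::'x set)" and u: "ultra p"
  shows "\<exists>l. (f \<longlongrightarrow> l) p"
proof (rule ccontr)
  assume nex: "\<nexists>l. (f \<longlongrightarrow> l) p"
  have ex: "\<exists>V. open V \<and> z \<in> V \<and> \<not> eventually (\<lambda>s. f s \<in> V) p" for z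
  proof -
    have "\<not> (f \<longlongrightarrow> z) p" using nex by blast
    then show ?thesis unfolding tendsto_def by blast
  qed
  then have "\<forall>z. \<exists>V. open V \<and> z \<in> V \<and> \<not> eventually (\<lambda>s. f s \<in> V) p" by blast
  then have "\<exists>V. \<forall>z. open (V z) \<and> z \<in> V z \<and> \<not> eventually (\<lambda>s. f s \<in> V z) p"
    by (rule choice)
  then obtain V where V0: "\<forall>z. open (V z) \<and> z \<in> V z \<and> \<not> eventually (\<lambda>s. f s \<in> V z) p"
    by blast
  have V: "open (V z)" "z \<in> V z" "\<not> eventually (\<lambda>s. f s \<in> V z) p" for z
    using V0 by auto
  have cov: "UNIV \<subseteq> (\<Union>z\<in>UNIV. V z)" using V(2) by auto
  obtain D where D: "finite D" "UNIV \<subseteq> (\<Union>z\<in>D. V z)"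
    by (rule compactE_image[OF c, of UNIV V, OF V(1) cov]) blast
  have "eventually (\<lambda>s. f s \<notin> V z) p" for z
    using ultra_cases[OF u, of "\<lambda>s. f s \<in> V z"] V(3)[of z] by simp
  then have "\<forall>z\<in>D. eventually (\<lambda>s. f s \<notin> V z) p" by blast
  then have "eventually (\<lambda>s. \<forall>z\<in>D. f s \<notin> V z) p"
    by (rule eventually_ball_finite[OF D(1)])
  then have "eventually (\<lambda>s. False) p"
    by (rule eventually_mono) (use D(2) in blast)
  then show False using ultra_nbot[OF u] by (simp add: eventually_False)
qed

lemma Tp_tendsto:
  fixes T :: "'s::semigroup_mult \<Rightarrow> 'x::t2_space \<Rightarrow> 'x"
  assumes "dynamical_system T" "ultra p"
  shows "((\<lambda>s. T s x) \<longlongrightarrow> Tp T p x) p"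
proof -
  have c: "compact (UNIV :: 'x set)" using assms(1) by (simp add: dynamical_system_def)
  obtain l where l: "((\<lambda>s. T s x) \<longlongrightarrow> l) p" using ultra_conv[OF c assms(2)] by blast
  have "Tp T p x = l" unfolding Tp_def
    by (rule tendsto_Lim) (use l ultra_nbot[OF assms(2)] in auto)
  then show ?thesis using l by simp
qed

lemma Tp_mult:
  assumes d: "dynamical_system T" and p: "ultra p" and q: "ultra q"
  shows "Tp T (bmult p q) x = Tp T p (Tp T q x)"
proof -
  define z where "z = Tp T q x"
  define w where "w = Tp T p z"
  have cont: "continuous_on UNIV (T s)" for s using d by (simp add: dynamical_system_def)
  have comp: "T s (T t v) = T (s * t) v" for s t v
  proof -
    have "T s \<circ> T t = T (s * t)" using d by (simp add: dynamical_system_def)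
    then have "(T s \<circ> T t) v = T (s * t) v" by simp
    then show ?thesis by simp
  qed
  have lim: "((\<lambda>u. T u x) \<longlongrightarrow> w) (bmult p q)"
    unfolding tendsto_def
  proof (intro allI impI)
    fix V assume V: "open V" "w \<in> V"
    have e1: "eventually (\<lambda>s. T s z \<in> V) p"
      using Tp_tendsto[OF d p, of z] V unfolding tendsto_def w_def by blast
    have "eventually (\<lambda>t. T (s * t) x \<in> V) q" if "T s z \<in> V" for s
    proof -
      have "((\<lambda>t. T s (T t x)) \<longlongrightarrow> T s z) q"
        using continuous_on_tendsto_compose[OF cont Tp_tendsto[OF d q, of x]] z_def by simp
      then have "eventually (\<lambda>t. T s (T t x) \<in> V) q"
        using V(1) that unfolding tendsto_def by blast
      then show ?thesis by (simp add: comp)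
    qed
    then show "eventually (\<lambda>u. T u x \<in> V) (bmult p q)"
      unfolding ev_bmult using e1 by (auto elim: eventually_mono)
  qed
  show ?thesis unfolding Tp_def[of T "bmult p q"]
    by (rule tendsto_Lim) (use lim ultra_nbot[OF ultra_bmult[OF p q]] in \<open>auto simp: w_def z_def\<close>)
qed


lemma Hausdorff_t2: "Hausdorff_space (euclidean :: 'x::t2_space topology)"
  unfolding Hausdorff_space_def disjnt_def by (simp add: separation_t2)

lemma sep_diag:
  fixes a b :: "'x::t2_space"
  assumes c: "compact (UNIV::'x set)" and ab: "a \<noteq> b"
  shows "\<exists>U Na Nb. open U \<and> (\<forall>z. (z,z) \<in> U) \<and> open Na \<and> open Nb \<and> a \<in> Na \<and> b \<in> Nb
     \<and> (\<forall>u v. u \<in> Na \<longrightarrow> v \<in> Nb \<longrightarrow> (u,v) \<notin> U)"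
proof -
  obtain Va Vb where V: "open Va" "open Vb" "a \<in> Va" "b \<in> Vb" "Va \<inter> Vb = {}"
    using separation_t2[of a b] ab by metis
  have "Vb \<inter> closure Va = {}" using open_Int_closure_eq_empty[OF V(2), of Va] V(5) by (simp add: Int_commute)
  then have "disjnt (closure Va) {b}" using V(4) by (auto simp: disjnt_def)
  moreover have "compact (closure Va)" using compact_Int_closed[OF c, of "closure Va"] by simp
  ultimately obtain W Nb where W: "openin euclidean W" "openin euclidean Nb" "closure Va \<subseteq> W" "{b} \<subseteq> Nb" "disjnt W Nb"
    using Hausdorff_space_compact_separation[OF Hausdorff_t2, of "closure Va" "{b}"]
    by (metis compactin_euclidean_iff compact_sing)
  have "W \<inter> closure Nb = {}" using open_Int_closure_eq_empty[of W Nb] W(1,5) by (simp add: disjnt_def)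
  then have dis: "closure Va \<inter> closure Nb = {}" using W(3) by blast
  let ?U = "- (closure Va \<times> closure Nb)"
  have "open ?U" by (intro open_Compl closed_Times closed_closure)
  moreover have "\<forall>z. (z,z) \<in> ?U" using dis by auto
  moreover have "\<forall>u v. u \<in> Va \<longrightarrow> v \<in> Nb \<longrightarrow> (u,v) \<notin> ?U"
    using closure_subset[of Va] closure_subset[of Nb] by auto
  moreover have "open Nb" "b \<in> Nb" using W by auto
  ultimately show ?thesis using V(1,3) by blast
qed


definition bclosed :: "'s filter set \<Rightarrow> bool" where
  "bclosed C \<longleftrightarrow> C \<subseteq> betaS \<and>
     (\<forall>p\<in>betaS. (\<forall>P. eventually P p \<longrightarrow> (\<exists>q\<in>C. eventually P q)) \<longrightarrow> p \<in> C)"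

lemma bclosed_directed:
  assumes ne: "\<CC> \<noteq> {}" and cl: "\<And>C. C \<in> \<CC> \<Longrightarrow> bclosed C \<and> C \<noteq> {}"
    and dir: "\<And>C1 C2. C1 \<in> \<CC> \<Longrightarrow> C2 \<in> \<CC> \<Longrightarrow> \<exists>C3\<in>\<CC>. C3 \<subseteq> C1 \<inter> C2"
  shows "\<Inter>\<CC> \<noteq> {}"
proof -
  define G where "G = Abs_filter (\<lambda>P. \<exists>C\<in>\<CC>. \<forall>q\<in>C. eventually P q)"
  have isf: "is_filter (\<lambda>P. \<exists>C\<in>\<CC>. \<forall>q\<in>C. eventually P q)"
  proof
    show "\<exists>C\<in>\<CC>. \<forall>q\<in>C. eventually (\<lambda>x. True) q" using ne by auto
  next
    fix P Q
    assume "\<exists>C\<in>\<CC>. \<forall>q\<in>C. eventually P q" "\<exists>C\<in>\<CC>. \<forall>q\<in>C. eventually Q q"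
    then obtain C1 C2 where "C1 \<in> \<CC>" "C2 \<in> \<CC>" "\<forall>q\<in>C1. eventually P q" "\<forall>q\<in>C2. eventually Q q"
      by blast
    moreover obtain C3 where "C3 \<in> \<CC>" "C3 \<subseteq> C1 \<inter> C2" using dir[OF \<open>C1 \<in> \<CC>\<close> \<open>C2 \<in> \<CC>\<close>] by blast
    ultimately show "\<exists>C\<in>\<CC>. \<forall>q\<in>C. eventually (\<lambda>x. P x \<and> Q x) q"
      by (intro bexI[of _ C3] ballI eventually_conj) auto
  next
    fix P Q :: "'a \<Rightarrow> bool"
    assume "\<forall>x. P x \<longrightarrow> Q x" "\<exists>C\<in>\<CC>. \<forall>q\<in>C. eventually P q"
    then show "\<exists>C\<in>\<CC>. \<forall>q\<in>C. eventually Q q" by (blast intro: eventually_mono)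
  qed
  have evG: "eventually P G \<longleftrightarrow> (\<exists>C\<in>\<CC>. \<forall>q\<in>C. eventually P q)" for P
    unfolding G_def by (rule eventually_Abs_filter[OF isf])
  have "G \<noteq> bot"
  proof
    assume "G = bot"
    then have "eventually (\<lambda>x. False) G" by simp
    then obtain C where C: "C \<in> \<CC>" "\<forall>q\<in>C. eventually (\<lambda>x. False) q" using evG by blast
    then obtain q where "q \<in> C" using cl by blast
    then have "ultra q" using cl[OF C(1)] by (auto simp: bclosed_def betaS_def)
    then show False using C(2) \<open>q \<in> C\<close> ultra_nbot by (auto simp: eventually_False)
  qed
  then obtain p where p: "ultra p" "p \<le> G" using ultra_exists by blast
  have "p \<in> C" if C: "C \<in> \<CC>" for C
  proof -
    have bc: "bclosed C" using cl[OF C] by blast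
    have "\<exists>q\<in>C. eventually P q" if Pp: "eventually P p" for P
    proof (rule ccontr)
      assume "\<not> (\<exists>q\<in>C. eventually P q)"
      note nq = this
      have Cb: "C \<subseteq> betaS" using bc by (simp add: bclosed_def)
      have "\<forall>q\<in>C. eventually (\<lambda>s. \<not> P s) q"
      proof
        fix q assume q: "q \<in> C"
        then have "ultra q" using Cb by (auto simp: betaS_def)
        then show "eventually (\<lambda>s. \<not> P s) q" using ultra_cases[of q P] nq q by blast
      qed
      then have "eventually (\<lambda>s. \<not> P s) G" using evG C by blast
      then have "eventually (\<lambda>s. \<not> P s) p" using p(2) by (rule filter_leD[rotated])
      then show False using ultra_contra[OF p(1) Pp] by blast
    qed
    then show ?thesis using bc p(1) by (auto simp: bclosed_def betaS_def)
  qed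
  then show ?thesis by blast
qed

lemma bclosed_Inter:
  assumes "\<CC> \<noteq> {}" "\<And>C. C \<in> \<CC> \<Longrightarrow> bclosed C"
  shows "bclosed (\<Inter>\<CC>)"
  unfolding bclosed_def
proof (intro conjI ballI impI)
  obtain C where C: "C \<in> \<CC>" using assms(1) by blast
  then have "C \<subseteq> betaS" using assms(2) by (simp add: bclosed_def)
  then show "\<Inter>\<CC> \<subseteq> betaS" using C by blast
next
  fix p assume p: "p \<in> betaS" and h: "\<forall>P. eventually P p \<longrightarrow> (\<exists>q\<in>\<Inter>\<CC>. eventually P q)"
  show "p \<in> \<Inter>\<CC>"
  proof
    fix C assume C: "C \<in> \<CC>"
    have "\<forall>P. eventually P p \<longrightarrow> (\<exists>q\<in>C. eventually P q)" using h C by blast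
    then show "p \<in> C" using assms(2)[OF C] p unfolding bclosed_def by blast
  qed
qed

lemma bclosed_Int: "bclosed A \<Longrightarrow> bclosed B \<Longrightarrow> bclosed (A \<inter> B)"
  using bclosed_Inter[of "{A, B}"] by auto

lemma bclosed_basic: "bclosed {r\<in>betaS. eventually Q r}"
  unfolding bclosed_def
proof (intro conjI ballI impI)
  fix p assume p: "p \<in> betaS" and h: "\<forall>P. eventually P p \<longrightarrow> (\<exists>q\<in>{r \<in> betaS. eventually Q r}. eventually P q)"
  have "eventually Q p"
  proof (rule ccontr)
    assume "\<not> eventually Q p"
    then have "eventually (\<lambda>s. \<not> Q s) p" using p ultra_cases by (auto simp: betaS_def)
    then obtain q where "q \<in> betaS" "eventually Q q" "eventually (\<lambda>s. \<not> Q s) q" using h by blast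
    then show False using ultra_contra by (auto simp: betaS_def)
  qed
  then show "p \<in> {r \<in> betaS. eventually Q r}" using p by auto
qed auto

lemma bclosed_Fbar: "bclosed (Fbar F)"
  unfolding bclosed_def
proof (intro conjI ballI impI)
  fix p assume p: "p \<in> betaS" and h: "\<forall>P. eventually P p \<longrightarrow> (\<exists>q\<in>Fbar F. eventually P q)"
  have "p \<le> F"
  proof (rule filter_leI)
    fix P assume PF: "eventually P F"
    show "eventually P p"
    proof (rule ccontr)
      assume "\<not> eventually P p"
      then have "eventually (\<lambda>s. \<not> P s) p" using p ultra_cases by (auto simp: betaS_def)
      then obtain q where q: "q \<in> Fbar F" "eventually (\<lambda>s. \<not> P s) q" using h by blast
      then have "eventually P q" using PF by (auto simp: Fbar_def intro: filter_leD)
      then show False using q ultra_contra by (auto simp: Fbar_def betaS_def)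
    qed
  qed
  then show "p \<in> Fbar F" using p by (simp add: Fbar_def)
qed (auto simp: Fbar_def)

lemma bclosed_image:
  assumes C: "bclosed C" and q: "q \<in> betaS"
  shows "bclosed ((\<lambda>r. bmult r q) ` C)"
  unfolding bclosed_def
proof (intro conjI ballI impI)
  show "(\<lambda>r. bmult r q) ` C \<subseteq> betaS"
    using C q ultra_bmult by (auto simp: bclosed_def betaS_def)
  fix p assume p: "p \<in> betaS"
    and h: "\<forall>P. eventually P p \<longrightarrow> (\<exists>r'\<in>(\<lambda>r. bmult r q) ` C. eventually P r')"
  define D where "D P = C \<inter> {r\<in>betaS. eventually (\<lambda>s. eventually (\<lambda>t. P (s * t)) q) r}" for P
  have D_iff: "r \<in> D P \<longleftrightarrow> r \<in> C \<and> eventually P (bmult r q)" for r P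
  proof -
    have "C \<subseteq> betaS" using C by (simp add: bclosed_def)
    then show ?thesis by (auto simp: D_def ev_bmult)
  qed
  let ?DD = "{D P | P. eventually P p}"
  have "\<Inter>?DD \<noteq> {}"
  proof (rule bclosed_directed)
    have "D (\<lambda>_. True) \<in> ?DD" by auto
    then show "?DD \<noteq> {}" by blast
  next
    fix X assume "X \<in> ?DD"
    then obtain P where X: "X = D P" "eventually P p" by blast
    have "bclosed X" unfolding X D_def by (intro bclosed_Int C bclosed_basic)
    moreover have "X \<noteq> {}" using h X D_iff by blast
    ultimately show "bclosed X \<and> X \<noteq> {}" by blast
  next
    fix X Y assume "X \<in> ?DD" "Y \<in> ?DD"
    then obtain P Q where X: "X = D P" "eventually P p" and Y: "Y = D Q" "eventually Q p" by blast
    have "D (\<lambda>s. P s \<and> Q s) \<in> ?DD" using X(2) Y(2) by (auto intro: eventually_conj)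
    moreover have "D (\<lambda>s. P s \<and> Q s) \<subseteq> X \<inter> Y"
      unfolding X Y D_iff by (auto simp: D_iff elim: eventually_mono)
    ultimately show "\<exists>Z\<in>?DD. Z \<subseteq> X \<inter> Y" by blast
  qed
  then obtain r where r: "r \<in> \<Inter>?DD" by blast
  have "D (\<lambda>_. True) \<in> ?DD" by auto
  then have "r \<in> D (\<lambda>_. True)" using r by blast
  then have rC: "r \<in> C" using D_iff by blast
  have le: "bmult r q \<le> p"
  proof (rule filter_leI)
    fix P assume "eventually P p"
    then have "r \<in> D P" using r by blast
    then show "eventually P (bmult r q)" using D_iff by blast
  qed
  have "bmult r q = p"
    by (rule ultra_le_eq) (use p rC C q ultra_bmult le in \<open>auto simp: betaS_def bclosed_def\<close>)
  then show "p \<in> (\<lambda>r. bmult r q) ` C" using rC by blast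
qed



lemma chain_rel: "C \<in> Chains (relation_of P A) \<Longrightarrow> C \<subseteq> A \<and> (\<forall>a\<in>C. \<forall>b\<in>C. P a b \<or> P b a)"
  unfolding Chains_def relation_of_def by auto

lemma exists_min_left_ideal:
  assumes K: "subsemigroup K" "bclosed K" and p0: "p0 \<in> K"
  shows "\<exists>L. minimal_left_ideal K L \<and> L \<subseteq> (\<lambda>r. bmult r p0) ` K"
proof -
  define Kp where "Kp q = (\<lambda>r. bmult r q) ` K" for q
  have Kb: "K \<subseteq> betaS" using K(1) by (simp add: subsemigroup_def)
  have Kmul: "bmult a b \<in> K" if "a \<in> K" "b \<in> K" for a b
    using K(1) that by (simp add: subsemigroup_def)
  have KpI: "left_ideal K (Kp q) \<and> bclosed (Kp q)" if q: "q \<in> K" for q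
  proof
    show "bclosed (Kp q)" unfolding Kp_def by (rule bclosed_image[OF K(2)]) (use q Kb in blast)
    have "Kp q \<noteq> {}" using q by (auto simp: Kp_def)
    moreover have "Kp q \<subseteq> K" using q Kmul by (auto simp: Kp_def)
    moreover have "bmult p r \<in> Kp q" if "p \<in> K" "r \<in> Kp q" for p r
    proof -
      obtain r' where r': "r' \<in> K" "r = bmult r' q" using \<open>r \<in> Kp q\<close> by (auto simp: Kp_def)
      have "bmult p r = bmult (bmult p r') q" using r' by (simp add: bmult_assoc)
      moreover have "bmult p r' \<in> K" using Kmul that(1) r'(1) by blast
      ultimately show ?thesis by (auto simp: Kp_def)
    qed
    ultimately show "left_ideal K (Kp q)" by (simp add: left_ideal_def)
  qed
  let ?A = "{C. bclosed C \<and> left_ideal K C \<and> C \<subseteq> Kp p0}"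
  have "\<exists>m\<in>?A. \<forall>a\<in>?A. (\<lambda>X Y. Y \<subseteq> X) m a \<longrightarrow> a = m"
  proof (rule predicate_Zorn)
    show "partial_order_on ?A (relation_of (\<lambda>X Y. Y \<subseteq> X) ?A)"
      by (rule partial_order_on_relation_ofI) auto
    fix C assume C: "C \<in> Chains (relation_of (\<lambda>X Y. Y \<subseteq> X) ?A)"
    have sub: "C \<subseteq> ?A" and tot: "\<forall>a\<in>C. \<forall>b\<in>C. b \<subseteq> a \<or> a \<subseteq> b"
      using chain_rel[OF C] by auto
    show "\<exists>u\<in>?A. \<forall>a\<in>C. u \<subseteq> a"
    proof (cases "C = {}")
      case True then show ?thesis using KpI[OF p0] by auto
    next
      case False
      have cl: "bclosed (\<Inter>C)" by (rule bclosed_Inter[OF False]) (use sub in blast)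
      have ne: "\<Inter>C \<noteq> {}"
      proof (rule bclosed_directed[OF False])
        fix X assume "X \<in> C"
        then show "bclosed X \<and> X \<noteq> {}" using sub by (auto simp: left_ideal_def)
      next
        fix X Y assume XY: "X \<in> C" "Y \<in> C"
        then have "Y \<subseteq> X \<or> X \<subseteq> Y" using tot by blast
        then show "\<exists>Z\<in>C. Z \<subseteq> X \<inter> Y" using XY by blast
      qed
      obtain c where c: "c \<in> C" using False by blast
      have "left_ideal K (\<Inter>C)" unfolding left_ideal_def
      proof (intro conjI ballI)
        show "\<Inter>C \<noteq> {}" by (rule ne)
        have "left_ideal K c" using c sub by blast
        then have "c \<subseteq> K" by (simp add: left_ideal_def)
        then show "\<Inter>C \<subseteq> K" using c by blast
        fix p q assume pq: "p \<in> K" "q \<in> \<Inter>C"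
        show "bmult p q \<in> \<Inter>C"
        proof
          fix X assume X: "X \<in> C"
          then have "left_ideal K X" using sub by blast
          moreover have "q \<in> X" using pq X by blast
          ultimately show "bmult p q \<in> X" using pq(1) by (simp add: left_ideal_def)
        qed
      qed
      moreover have "\<Inter>C \<subseteq> Kp p0" using c sub by blast
      ultimately show ?thesis using cl by blast
    qed
  qed
  then obtain m where mA: "m \<in> ?A" and mmin0: "\<forall>a\<in>?A. a \<subseteq> m \<longrightarrow> a = m"
    by blast
  have m: "bclosed m" "left_ideal K m" "m \<subseteq> Kp p0" using mA by auto
  have mmin: "a = m" if "bclosed a" "left_ideal K a" "a \<subseteq> Kp p0" "a \<subseteq> m" for a
    using mmin0 that by blast
  have "minimal_left_ideal K m" unfolding minimal_left_ideal_def
  proof (intro conjI allI impI m(2))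
    fix L' assume L': "left_ideal K L' \<and> L' \<subseteq> m"
    then obtain q where q: "q \<in> L'" by (auto simp: left_ideal_def)
    have qK: "q \<in> K" using q L' by (auto simp: left_ideal_def)
    have "Kp q \<subseteq> L'" using L' q by (auto simp: Kp_def left_ideal_def)
    then have "Kp q \<subseteq> m" using L' by blast
    moreover have "Kp q \<subseteq> Kp p0" using \<open>Kp q \<subseteq> m\<close> m(3) by blast
    ultimately have "Kp q = m" using mmin KpI[OF qK] by blast
    then show "L' = m" using \<open>Kp q \<subseteq> L'\<close> L' by auto
  qed
  then show ?thesis using m(3) by (auto simp: Kp_def)
qed

theorem lemma13:
  fixes F :: "'s::semigroup_mult filter"
    and T :: "'s \<Rightarrow> 'x::t2_space \<Rightarrow> 'x"
    and x y :: 'x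
  assumes "subsemigroup (Fbar F)"
    and "dynamical_system T"
    and "F_proximal F T x y"
  shows "\<exists>L. minimal_left_ideal (Fbar F) L \<and> (\<forall>u\<in>L. Tp T u x = Tp T u y)"
proof -
  note d = assms(2)
  have c: "compact (UNIV :: 'x set)" using d by (simp add: dynamical_system_def)
  define UU where "UU = {U :: ('x \<times> 'x) set. open U \<and> (\<forall>z. (z,z) \<in> U)}"
  define H where "H = (INF U\<in>UU. principal {s. (T s x, T s y) \<in> U})"
  have evH: "eventually P H \<longleftrightarrow> (\<exists>U\<in>UU. eventually P (principal {s. (T s x, T s y) \<in> U}))" for P
    unfolding H_def
  proof (rule eventually_INF_base)
    have "UNIV \<in> UU" unfolding UU_def by simp
    then show "UU \<noteq> {}" by blast
    fix U1 U2 assume "U1 \<in> UU" "U2 \<in> UU"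
    then have "U1 \<inter> U2 \<in> UU" unfolding UU_def by auto
    then show "\<exists>U\<in>UU. principal {s. (T s x, T s y) \<in> U} \<le>
       inf (principal {s. (T s x, T s y) \<in> U1}) (principal {s. (T s x, T s y) \<in> U2})"
      by (intro bexI[of _ "U1 \<inter> U2"]) auto
  qed
  define G where "G = inf F H"
  have "G \<noteq> bot"
  proof
    assume "G = bot"
    then have "eventually (\<lambda>s. False) G" by simp
    then obtain Q R where QR: "eventually Q F" "eventually R H" "\<forall>s. Q s \<and> R s \<longrightarrow> False"
      unfolding G_def eventually_inf by blast
    obtain U where U1: "U \<in> UU" "eventually R (principal {s. (T s x, T s y) \<in> U})"
      using evH[of R] QR(2) by blast
    then have U: "U \<in> UU" "\<forall>s. (T s x, T s y) \<in> U \<longrightarrow> R s"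
      by (auto simp: eventually_principal)
    have "open U \<and> (\<forall>z. (z,z) \<in> U)" using U(1) by (simp add: UU_def)
    then have "\<forall>A. eventually (\<lambda>s. s \<in> A) F \<longrightarrow> (\<exists>s\<in>A. (T s x, T s y) \<in> U)"
      using assms(3) unfolding F_proximal_def by blast
    then have "eventually (\<lambda>s. s \<in> {s. Q s}) F \<longrightarrow> (\<exists>s\<in>{s. Q s}. (T s x, T s y) \<in> U)"
      by blast
    then have "\<exists>s\<in>{s. Q s}. (T s x, T s y) \<in> U" using QR(1) by simp
    then show False using U(2) QR(3) by blast
  qed
  then obtain p where p: "ultra p" "p \<le> G" using ultra_exists by blast
  have "p \<le> F" using p(2) unfolding G_def by (rule order_trans) simp
  then have pF: "p \<in> Fbar F" using p(1) by (simp add: Fbar_def betaS_def)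
  have evU: "eventually (\<lambda>s. (T s x, T s y) \<in> U) p" if "U \<in> UU" for U
  proof -
    have "eventually (\<lambda>s. (T s x, T s y) \<in> U) H"
      by (rule evH[THEN iffD2], rule bexI[OF _ that]) (simp add: eventually_principal)
    then have "eventually (\<lambda>s. (T s x, T s y) \<in> U) G" unfolding G_def
      by (rule filter_leD[rotated]) simp
    then show ?thesis using p(2) by (rule filter_leD[rotated])
  qed
  have pxy: "Tp T p x = Tp T p y"
  proof (rule ccontr)
    assume ne: "Tp T p x \<noteq> Tp T p y"
    obtain U Na Nb where N: "open U" "\<forall>z. (z,z) \<in> U" "open Na" "open Nb" "Tp T p x \<in> Na" "Tp T p y \<in> Nb"
      "\<forall>u v. u \<in> Na \<longrightarrow> v \<in> Nb \<longrightarrow> (u,v) \<notin> U"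
      using sep_diag[OF c ne] by blast
    have e1: "eventually (\<lambda>s. T s x \<in> Na) p" using Tp_tendsto[OF d p(1), of x] N(3,5)
      unfolding tendsto_def by blast
    have e2: "eventually (\<lambda>s. T s y \<in> Nb) p" using Tp_tendsto[OF d p(1), of y] N(4,6)
      unfolding tendsto_def by blast
    have e3: "eventually (\<lambda>s. (T s x, T s y) \<in> U) p" using evU[of U] N(1,2) by (simp add: UU_def)
    have "eventually (\<lambda>s. False) p" using e1 e2 e3
      by eventually_elim (use N(7) in blast)
    then show False using ultra_nbot[OF p(1)] by (simp add: eventually_False)
  qed
  obtain L where L: "minimal_left_ideal (Fbar F) L" "L \<subseteq> (\<lambda>r. bmult r p) ` Fbar F"
    using exists_min_left_ideal[OF assms(1) bclosed_Fbar pF] by blast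
  have "Tp T u x = Tp T u y" if "u \<in> L" for u
  proof -
    obtain r where r: "r \<in> Fbar F" "u = bmult r p" using L(2) \<open>u \<in> L\<close> by blast
    have ur: "ultra r" using r(1) by (simp add: Fbar_def betaS_def)
    show ?thesis using Tp_mult[OF d ur p(1)] pxy r(2) by simp
  qed
  then show ?thesis using L(1) by blast
qed


end
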